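(* Let $J_{nonlsd}\subset MPR$ be the subgroup spanned by all permutation words that are not lsd. Then $J_{nonlsd}$ is a two-sided ideal of the algebra $(MPR,m')$.
   Context: A permutation word of length $n$ is a word $[s_1,\dots,s_n]$ over $\mathbf N$ in which each of $1,\dots,n$ occurs exactly once; $S_n$ denotes the set of these; the empty word is the permutation word of length $0$. Its descent set is $\mathrm{desc}(\sigma)=\{i\in\{1,\dots,n-1\}:s_i>s_{i+1}\}$. A permutation $\sigma\in S_n$ is lsd if it is the lexicographically smallest element of $\{\tau\in S_n:\mathrm{desc}(\tau)=\mathrm{desc}(\sigma)\}$. $*$ is concatenation, $\mathrm{supp}$ the set of letters of a word, and for a word $\alpha$ over $\mathbf N$ without repeated letters $\mathrm{st}(\alpha)$ replaces its letters by $1,\dots,\mathrm{length}(\alpha)$ via the order-preserving bijection. $(MPR,m')$ is the free abelian group on all permutation words with product defined for $\sigma\in S_m$, $\tau\in S_n$ by $m'(\sigma\otimes\tau)=\sum u*v$ over all pairs of words $u,v$ over $\mathbf N$ with $\mathrm{supp}(u)\cup\mathrm{supp}(v)=\{1,\dots,m+n\}$ (disjointly), $\mathrm{st}(u)=\sigma$, $\mathrm{st}(v)=\tau$. *)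

theory Defs
  imports "HOL-Library.Poly_Mapping"
begin

definition permword :: "nat list \<Rightarrow> bool" where
  "permword w \<longleftrightarrow> distinct w \<and> set w = {1..length w}"

definition Sn :: "nat \<Rightarrow> nat list set" where
  "Sn n = {w. permword w \<and> length w = n}"

definition desc :: "nat list \<Rightarrow> nat set" where
  "desc w = {i \<in> {1..length w - 1}. w ! (i - 1) > w ! i}"

text \<open>lsd: lexicographically smallest element of its descent class in S_n.\<close>
definition lsd :: "nat list \<Rightarrow> bool" where
  "lsd \<sigma> \<longleftrightarrow> (\<forall>\<tau> \<in> Sn (length \<sigma>). desc \<tau> = desc \<sigma> \<longrightarrow>
                 \<tau> = \<sigma> \<or> (\<sigma>, \<tau>) \<in> lexord {(a, b). a < b})"

text \<open>Standardization of a word without repeated letters.\<close>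
definition st :: "nat list \<Rightarrow> nat list" where
  "st \<alpha> = map (\<lambda>a. card {b \<in> set \<alpha>. b \<le> a}) \<alpha>"

definition mpairs :: "nat list \<Rightarrow> nat list \<Rightarrow> (nat list \<times> nat list) set" where
  "mpairs \<sigma> \<tau> = {(u, v). distinct u \<and> distinct v \<and> set u \<inter> set v = {} \<and>
      set u \<union> set v = {1..length \<sigma> + length \<tau>} \<and> st u = \<sigma> \<and> st v = \<tau>}"

text \<open>MPR: the free abelian group on permutation words, as finitely supported
  integer-valued functions on words supported on permutation words.\<close>
definition MPR :: "(nat list \<Rightarrow>\<^sub>0 int) set" where
  "MPR = {f. Poly_Mapping.keys f \<subseteq> {w. permword w}}"

definition mbasic :: "nat list \<Rightarrow> nat list \<Rightarrow> (nat list \<Rightarrow>\<^sub>0 int)" where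
  "mbasic \<sigma> \<tau> = (\<Sum>(u, v) \<in> mpairs \<sigma> \<tau>. Poly_Mapping.single (u @ v) 1)"

definition mprod :: "(nat list \<Rightarrow>\<^sub>0 int) \<Rightarrow> (nat list \<Rightarrow>\<^sub>0 int) \<Rightarrow> (nat list \<Rightarrow>\<^sub>0 int)" where
  "mprod f g = (\<Sum>\<sigma> \<in> Poly_Mapping.keys f. \<Sum>\<tau> \<in> Poly_Mapping.keys g.
      Poly_Mapping.map (\<lambda>c. (Poly_Mapping.lookup f \<sigma> * Poly_Mapping.lookup g \<tau>) * c) (mbasic \<sigma> \<tau>))"

definition J_nonlsd :: "(nat list \<Rightarrow>\<^sub>0 int) set" where
  "J_nonlsd = {f. Poly_Mapping.keys f \<subseteq> {w. permword w \<and> \<not> lsd w}}"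

end

theory Submission
  imports Defs
begin

lemma keys_pmap_subset: "Poly_Mapping.keys (Poly_Mapping.map f p) \<subseteq> Poly_Mapping.keys p"
  by (auto simp: in_keys_iff map.rep_eq)

definition PP :: "nat list \<Rightarrow> bool" where
  "PP w \<longleftrightarrow> (\<forall>i j. i < j \<and> j < length w \<and> w ! i > w ! j \<longrightarrow>
                (\<forall>k. i \<le> k \<and> k < j \<longrightarrow> w ! k > w ! Suc k))"

definition QQ :: "nat list \<Rightarrow> bool" where
  "QQ w \<longleftrightarrow> (\<forall>p q. p < q \<and> q < length w \<and> w ! p = Suc (w ! q) \<longrightarrow> q = Suc p)"

lemma desc_iff:
  assumes "Suc k < length w"
  shows "Suc k \<in> desc w \<longleftrightarrow> w ! k > w ! Suc k"
  using assms by (auto simp: desc_def)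

lemma st_less:
  fixes \<alpha> :: "nat list"
  assumes "distinct \<alpha>" "a \<in> set \<alpha>" "b \<in> set \<alpha>"
  shows "card {c \<in> set \<alpha>. c \<le> a} < card {c \<in> set \<alpha>. c \<le> b} \<longleftrightarrow> a < b"
proof
  assume "a < b"
  then have "{c \<in> set \<alpha>. c \<le> a} \<subseteq> {c \<in> set \<alpha>. c \<le> b}" by auto
  moreover have "b \<in> {c \<in> set \<alpha>. c \<le> b}" "b \<notin> {c \<in> set \<alpha>. c \<le> a}" using assms \<open>a < b\<close> by auto
  ultimately have "{c \<in> set \<alpha>. c \<le> a} \<subset> {c \<in> set \<alpha>. c \<le> b}" by blast
  then show "card {c \<in> set \<alpha>. c \<le> a} < card {c \<in> set \<alpha>. c \<le> b}"
    by (intro psubset_card_mono) auto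
next
  assume h: "card {c \<in> set \<alpha>. c \<le> a} < card {c \<in> set \<alpha>. c \<le> b}"
  show "a < b"
  proof (rule ccontr)
    assume "\<not> a < b"
    then have "{c \<in> set \<alpha>. c \<le> b} \<subseteq> {c \<in> set \<alpha>. c \<le> a}" by auto
    then have "card {c \<in> set \<alpha>. c \<le> b} \<le> card {c \<in> set \<alpha>. c \<le> a}"
      by (intro card_mono) auto
    with h show False by simp
  qed
qed

lemma PP_st:
  assumes "distinct \<alpha>" "PP \<alpha>"
  shows "PP (st \<alpha>)"
proof -
  have L: "length (st \<alpha>) = length \<alpha>" by (simp add: st_def)
  have C: "st \<alpha> ! i < st \<alpha> ! j \<longleftrightarrow> \<alpha> ! i < \<alpha> ! j" if "i < length \<alpha>" "j < length \<alpha>" for i j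
    using that st_less[OF assms(1), of "\<alpha> ! i" "\<alpha> ! j"] by (simp add: st_def)
  show ?thesis unfolding PP_def L
  proof (intro allI impI)
    fix i j k assume h: "i < j \<and> j < length \<alpha> \<and> st \<alpha> ! j < st \<alpha> ! i" "i \<le> k \<and> k < j"
    then have "\<alpha> ! j < \<alpha> ! i" using C[of j i] by auto
    then have "\<alpha> ! Suc k < \<alpha> ! k" using assms(2) h unfolding PP_def by blast
    then show "st \<alpha> ! Suc k < st \<alpha> ! k" using C[of "Suc k" k] h by auto
  qed
qed

lemma PP_append:
  assumes "PP (u @ v)"
  shows "PP u" "PP v"
proof -
  show "PP u" unfolding PP_def
  proof (intro allI impI)
    fix i j k assume h: "i < j \<and> j < length u \<and> u ! j < u ! i" "i \<le> k \<and> k < j"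
    have "(u@v) ! k > (u@v) ! Suc k"
      using assms h unfolding PP_def
      by (elim allE[of _ i] allE[of _ j] allE[of _ k]) (auto simp: nth_append)
    then show "u ! k > u ! Suc k" using h by (simp add: nth_append)
  qed
  show "PP v" unfolding PP_def
  proof (intro allI impI)
    fix i j k assume h: "i < j \<and> j < length v \<and> v ! j < v ! i" "i \<le> k \<and> k < j"
    have h2: "(u@v) ! (length u + j) < (u@v) ! (length u + i)" using h by (simp add: nth_append)
    have h3: "(u@v) ! Suc (length u + k) = v ! Suc k"
      by (metis add_Suc_right nth_append_length_plus)
    have PPd: "\<And>i j k. i<j \<Longrightarrow> j < length (u@v) \<Longrightarrow> (u@v)!i > (u@v)!j \<Longrightarrow> i \<le> k \<Longrightarrow> k < j
       \<Longrightarrow> (u@v)!k > (u@v)!Suc k" using assms unfolding PP_def by blast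
    have "(u@v) ! (length u + k) > (u@v) ! Suc (length u + k)"
      by (rule PPd[of "length u + i" "length u + j"]) (use h h2 in auto)
    then show "v ! k > v ! Suc k" using h h3 by (simp add: nth_append)
  qed
qed

lemma lsd_QQ:
  assumes pw: "permword w" and ls: "lsd w"
  shows "QQ w"
proof (rule ccontr)
  assume "\<not> QQ w"
  then obtain p q where pq: "p < q" "q < length w" "w ! p = Suc (w ! q)" "q \<noteq> Suc p"
    by (auto simp: QQ_def)
  define v where "v = w ! q"
  define f where "f x = (if x = v then Suc v else if x = Suc v then v else x)" for x
  define \<tau> where "\<tau> = map f w"
  have ff: "f (f x) = x" for x by (auto simp: f_def)
  have inj: "inj f" by (metis ff injI)
  have dw: "distinct w" using pw by (simp add: permword_def)
  have sw: "set w = {1..length w}" using pw by (simp add: permword_def)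
  have len: "length \<tau> = length w" by (simp add: \<tau>_def)
  have dist: "distinct \<tau>" using dw inj by (simp add: \<tau>_def distinct_map inj_on_def inj_def)
  have vin: "v \<in> set w" "Suc v \<in> set w" using pq nth_mem[of p w] nth_mem[of q w] by (auto simp: v_def)
  have fS: "f x \<in> set w" if "x \<in> set w" for x
    using that vin by (auto simp: f_def)
  have "set \<tau> = f ` set w" by (simp add: \<tau>_def)
  also have "\<dots> = set w"
  proof
    show "f ` set w \<subseteq> set w" using fS by auto
    show "set w \<subseteq> f ` set w" by (metis ff fS image_eqI subsetI)
  qed
  finally have st: "set \<tau> = {1..length \<tau>}" using sw len by simp
  have inS: "\<tau> \<in> Sn (length w)" using st dist len by (simp add: Sn_def permword_def)
  have ford: "f x < f y \<longleftrightarrow> x < y"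
    if "\<not> (x = v \<and> y = Suc v)" "\<not> (x = Suc v \<and> y = v)" for x y
    using that by (auto simp: f_def)
  have pos_v: "t = q" if "t < length w" "w ! t = v" for t
    using that pq dw by (metis nth_eq_iff_index_eq v_def)
  have pos_sv: "t = p" if "t < length w" "w ! t = Suc v" for t
    using that pq dw by (metis nth_eq_iff_index_eq v_def order.strict_trans)
  have "desc \<tau> = desc w"
  proof -
    have "(\<tau> ! (i - 1) > \<tau> ! i) \<longleftrightarrow> (w ! (i - 1) > w ! i)"
      if "i \<in> {1..length w - 1}" for i
    proof -
      have i: "i - 1 < length w" "i < length w" "Suc (i - 1) = i" using that by auto
      have "\<not> (w ! i = v \<and> w ! (i - 1) = Suc v)"
        using pos_v[OF i(2)] pos_sv[OF i(1)] i pq by auto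
      moreover have "\<not> (w ! i = Suc v \<and> w ! (i - 1) = v)"
        using pos_v[OF i(1)] pos_sv[OF i(2)] i pq by auto
      ultimately show ?thesis using ford i by (simp add: \<tau>_def)
    qed
    then show ?thesis unfolding desc_def len by (intro Collect_cong) auto
  qed
  with ls inS have "\<tau> = w \<or> (w, \<tau>) \<in> lexord {(a, b). a < b}"
    unfolding lsd_def by blast
  moreover have "\<tau> ! p \<noteq> w ! p" "(\<tau>, w) \<in> lexord {(a, b). a < b}"
  proof -
    have tp: "\<tau> ! p = v" using pq by (simp add: \<tau>_def f_def v_def)
    then show "\<tau> ! p \<noteq> w ! p" using pq v_def by simp
    have "take p \<tau> = take p w"
    proof (rule nth_equalityI)
      fix t assume "t < length (take p \<tau>)"
      then have t: "t < p" "t < length w" using len by auto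
      have "w ! t \<noteq> v" using pos_v[OF t(2)] t pq by auto
      moreover have "w ! t \<noteq> Suc v" using pos_sv[OF t(2)] t by auto
      ultimately show "take p \<tau> ! t = take p w ! t" using t by (simp add: \<tau>_def f_def)
    qed (simp add: len)
    then show "(\<tau>, w) \<in> lexord {(a, b). a < b}"
      unfolding lexord_take_index_conv using pq tp len v_def
      by (intro disjI2 exI[of _ p]) auto
  qed
  moreover have "asym {(a::nat, b). a < b}" by (auto intro: asymI)
  ultimately show False using lexord_asymmetric by blast
qed

lemma QQ_PP:
  assumes pw: "permword w" and qq: "QQ w"
  shows "PP w"
proof -
  have dw: "distinct w" and sw: "set w = {1..length w}" using pw by (auto simp: permword_def)
  have main: "\<forall>i j. w ! i - w ! j = d \<longrightarrow> i < j \<longrightarrow> j < length w \<longrightarrow> w ! i > w ! j \<longrightarrow>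
      (\<forall>k. i \<le> k \<and> k < j \<longrightarrow> w ! k > w ! Suc k)" for d
  proof (induction d rule: less_induct)
    case (less d)
    show ?case
    proof (intro allI impI)
      fix i j k
      assume h: "w ! i - w ! j = d" "i < j" "j < length w" "w ! i > w ! j" "i \<le> k \<and> k < j"
      define a where "a = w ! j"
      have "w ! i \<in> set w" using h by auto
      then have "w ! i \<le> length w" using sw by auto
      then have "Suc a \<in> set w" using sw h a_def by auto
      then obtain l where l: "l < length w" "w ! l = Suc a" by (auto simp: in_set_conv_nth)
      have lj: "l \<noteq> j" using l a_def by auto
      have inj: "x = y" if "x < length w" "y < length w" "w ! x = w ! y" for x y
        using that dw nth_eq_iff_index_eq by blast
      show "w ! k > w ! Suc k"
      proof (cases "l < j")
        case True
        have "l < j \<and> j < length w \<and> w ! l = Suc (w ! j)" using True h l a_def by simp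
        then have jl: "j = Suc l" using qq unfolding QQ_def by blast
        show ?thesis
        proof (cases "l = i")
          case True
          then have "k = i" using h jl by auto
          moreover have "w ! Suc i < w ! i" using h jl True by simp
          ultimately show ?thesis by simp
        next
          case False
          then have il: "i < l" using h jl by auto
          have "w ! i \<noteq> w ! l" using inj[of i l] il l h by auto
          then have gt: "w ! i > w ! l" using l h a_def by auto
          have dl: "w ! i - w ! l < d" using h l a_def gt by auto
          show ?thesis
          proof (cases "k < l")
            case True
            then show ?thesis using less.IH[OF dl, rule_format, of i l k] il l gt h by simp
          next
            case False
            then have "k = l" using h jl by auto
            then show ?thesis using l jl a_def by auto
          qed
        qed
      next
        case False
        then have jl: "j < l" using lj by auto
        have "w ! i \<noteq> w ! l" using inj[of i l] jl l h by auto
        then have gt: "w ! i > w ! l" using l h a_def by auto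
        have dl: "w ! i - w ! l < d" using h l a_def gt by auto
        show ?thesis using less.IH[OF dl, rule_format, of i l k] jl l gt h by simp
      qed
    qed
  qed
  show ?thesis unfolding PP_def using main by blast
qed

lemma dec_le:
  assumes "\<forall>k. i \<le> k \<and> k < m \<longrightarrow> (x::nat list) ! k > x ! Suc k"
  shows "i \<le> t \<Longrightarrow> t \<le> m \<Longrightarrow> x ! t \<le> x ! i"
proof (induction t)
  case 0
  then show ?case by simp
next
  case (Suc t)
  show ?case
  proof (cases "i = Suc t")
    case True then show ?thesis by simp
  next
    case False
    then have it: "i \<le> t" "t < m" using Suc by auto
    then have "x ! Suc t < x ! t" using assms by blast
    moreover have "x ! t \<le> x ! i" using Suc.IH it by simp
    ultimately show ?thesis by simp
  qed
qed

lemma PP_lsd: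
  assumes pw: "permword w" and pp: "PP w"
  shows "lsd w"
  unfolding lsd_def
proof (intro ballI impI)
  fix \<tau> assume tS: "\<tau> \<in> Sn (length w)" and dd: "desc \<tau> = desc w"
  define n where "n = length w"
  have ppd: "\<And>i j. i < j \<Longrightarrow> j < length w \<Longrightarrow> w ! i > w ! j \<Longrightarrow> \<forall>k. i \<le> k \<and> k < j \<longrightarrow> w ! k > w ! Suc k"
    using pp unfolding PP_def by blast
  have dw: "distinct w" and sw: "set w = {1..n}" using pw by (auto simp: permword_def n_def)
  have dt: "distinct \<tau>" and st: "set \<tau> = {1..n}" and lt: "length \<tau> = n"
    using tS by (auto simp: Sn_def permword_def n_def)
  show "\<tau> = w \<or> (w, \<tau>) \<in> lexord {(a, b). a < b}"
  proof (rule ccontr)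
    assume nc: "\<not> ?thesis"
    have tot: "\<forall>a b. (a,b) \<in> {(a::nat, b). a < b} \<or> a = b \<or> (b,a) \<in> {(a::nat, b). a < b}" by auto
    have "(\<tau>, w) \<in> lexord {(a, b). a < b}"
      using tot lexord_linear[of "{(a::nat, b). a < b}" w \<tau>] nc by auto
    then obtain i where i: "i < n" "take i \<tau> = take i w" "\<tau> ! i < w ! i"
      unfolding lexord_take_index_conv using lt n_def by auto
    define a where "a = \<tau> ! i"
    have DE: "\<tau> ! k > \<tau> ! Suc k \<longleftrightarrow> w ! k > w ! Suc k" if "Suc k < n" for k
      using desc_iff[of k \<tau>] desc_iff[of k w] dd that lt n_def by auto
    define M where "M = {m. i \<le> m \<and> m < n \<and> (\<forall>k. i \<le> k \<and> k < m \<longrightarrow> w ! k > w ! Suc k)}"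
    have fM: "finite M" unfolding M_def by (rule finite_subset[of _ "{..<n}"]) auto
    have iM: "i \<in> M" using i unfolding M_def by auto
    define m where "m = Max M"
    have mM: "m \<in> M" using fM iM m_def Max_in by blast
    then have m: "i \<le> m" "m < n" "\<forall>k. i \<le> k \<and> k < m \<longrightarrow> w ! k > w ! Suc k"
      unfolding M_def by auto
    have mmax: "\<not> w ! m > w ! Suc m" if "Suc m < n"
    proof
      assume "w ! m > w ! Suc m"
      then have "Suc m \<in> M" using m that unfolding M_def
        by (auto simp: less_Suc_eq_le le_less)
      then have "Suc m \<le> m" using fM m_def by auto
      then show False by simp
    qed
    have tdesc: "\<forall>k. i \<le> k \<and> k < m \<longrightarrow> \<tau> ! k > \<tau> ! Suc k"
      using m DE by auto
    have notpre: "xs ! t \<notin> set (take i xs)" if "distinct xs" "t < length xs" "i \<le> t" for xs :: "nat list" and t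
    proof
      assume "xs ! t \<in> set (take i xs)"
      then obtain s where "s < length (take i xs)" "take i xs ! s = xs ! t"
        by (auto simp: in_set_conv_nth)
      then have "s < i" "s < length xs" "xs ! s = xs ! t" by auto
      then show False using that nth_eq_iff_index_eq by fastforce
    qed
    define A where "A = (\<lambda>t. \<tau> ! t) ` {i..m}"
    define B where "B = (\<lambda>t. w ! t) ` {i..m}"
    have AB: "A \<subseteq> B"
    proof
      fix c assume "c \<in> A"
      then obtain t where t: "t \<in> {i..m}" "c = \<tau> ! t" unfolding A_def by auto
      have "c \<in> set w" using t st sw lt m by auto
      then obtain k where k: "k < n" "w ! k = c" using n_def by (auto simp: in_set_conv_nth)
      have "c \<notin> set (take i \<tau>)" using notpre[OF dt, of t] t m lt by auto
      then have "c \<notin> set (take i w)" using i by simp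
      then have ki: "i \<le> k"
      proof -
        { assume "k < i"
          then have kl: "k < length (take i w)" using k n_def by simp
          have "take i w ! k = w ! k" using \<open>k < i\<close> by simp
          then have "w ! k \<in> set (take i w)" using nth_mem[OF kl] by simp
          then have False using k \<open>c \<notin> set (take i w)\<close> by simp }
        then show ?thesis by force
      qed
      have "k \<le> m"
      proof (rule ccontr)
        assume "\<not> k \<le> m"
        then have km: "m < k" by simp
        have "c \<le> a" using dec_le[OF tdesc] t a_def by auto
        then have "w ! i > w ! k" using i k a_def by auto
        moreover have "i < k" using km m by simp
        ultimately have "\<forall>k'. i \<le> k' \<and> k' < k \<longrightarrow> w ! k' > w ! Suc k'"
          using ppd k n_def by blast
        then have "w ! m > w ! Suc m" using m km by auto
        moreover have "Suc m < n" using km k by auto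
        ultimately show False using mmax by blast
      qed
      then show "c \<in> B" using ki k unfolding B_def by auto
    qed
    have "inj_on (\<lambda>t. \<tau> ! t) {i..m}"
    proof (rule inj_onI)
      fix x y assume "x \<in> {i..m}" "y \<in> {i..m}" "\<tau> ! x = \<tau> ! y"
      then show "x = y" using dt lt m nth_eq_iff_index_eq[OF dt, of x y] by simp
    qed
    then have cA: "card A = card {i..m}" unfolding A_def by (rule card_image)
    have "inj_on (\<lambda>t. w ! t) {i..m}"
    proof (rule inj_onI)
      fix x y assume "x \<in> {i..m}" "y \<in> {i..m}" "w ! x = w ! y"
      then show "x = y" using dw n_def m nth_eq_iff_index_eq[OF dw, of x y] by simp
    qed
    then have cB: "card B = card {i..m}" unfolding B_def by (rule card_image)
    have "A = B" using AB cA cB by (intro card_subset_eq) (auto simp: B_def)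
    moreover have "w ! i \<in> B" using m unfolding B_def by auto
    ultimately obtain t where t: "t \<in> {i..m}" "w ! i = \<tau> ! t" unfolding A_def by auto
    have "\<tau> ! t \<le> a" using dec_le[OF tdesc] t a_def by auto
    then show False using t i a_def by auto
  qed
qed

lemma lsd_iff_PP: "permword w \<Longrightarrow> lsd w \<longleftrightarrow> PP w"
  using lsd_QQ QQ_PP PP_lsd by blast

lemma mpairs_props:
  assumes "(u, v) \<in> mpairs \<sigma> \<tau>"
  shows "permword (u @ v)" "distinct u" "distinct v" "st u = \<sigma>" "st v = \<tau>"
proof -
  have h: "distinct u" "distinct v" "set u \<inter> set v = {}"
      "set u \<union> set v = {1..length \<sigma> + length \<tau>}" "st u = \<sigma>" "st v = \<tau>"
    using assms by (auto simp: mpairs_def)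
  have "length u = length \<sigma>" "length v = length \<tau>" using h(5,6) by (auto simp: st_def)
  then show "permword (u @ v)" using h by (auto simp: permword_def)
  show "distinct u" "distinct v" "st u = \<sigma>" "st v = \<tau>" using h by auto
qed

lemma nonlsd_right:
  assumes "(u, v) \<in> mpairs \<sigma> \<tau>" "permword \<tau>" "\<not> lsd \<tau>"
  shows "permword (u @ v) \<and> \<not> lsd (u @ v)"
proof -
  note mp = mpairs_props[OF assms(1)]
  have "\<not> lsd (u @ v)"
  proof
    assume "lsd (u @ v)"
    then have "PP (u @ v)" using lsd_iff_PP mp(1) by blast
    then have "PP v" by (rule PP_append)
    then have "PP (st v)" using mp(3) PP_st by blast
    then have "lsd \<tau>" using mp(5) assms(2) lsd_iff_PP by simp
    then show False using assms(3) by simp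
  qed
  then show ?thesis using mp(1) by simp
qed

lemma nonlsd_left:
  assumes "(u, v) \<in> mpairs \<sigma> \<tau>" "permword \<sigma>" "\<not> lsd \<sigma>"
  shows "permword (u @ v) \<and> \<not> lsd (u @ v)"
proof -
  note mp = mpairs_props[OF assms(1)]
  have "\<not> lsd (u @ v)"
  proof
    assume "lsd (u @ v)"
    then have "PP (u @ v)" using lsd_iff_PP mp(1) by blast
    then have "PP u" by (rule PP_append)
    then have "PP (st u)" using mp(2) PP_st by blast
    then have "lsd \<sigma>" using mp(4) assms(2) lsd_iff_PP by simp
    then show False using assms(3) by simp
  qed
  then show ?thesis using mp(1) by simp
qed

lemma keys_mbasic: "Poly_Mapping.keys (mbasic \<sigma> \<tau>) \<subseteq> {u @ v | u v. (u, v) \<in> mpairs \<sigma> \<tau>}"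
proof -
  have "Poly_Mapping.keys (mbasic \<sigma> \<tau>) \<subseteq>
     (\<Union>i\<in>mpairs \<sigma> \<tau>. Poly_Mapping.keys ((\<lambda>(u, v). Poly_Mapping.single (u @ v) (1::int)) i))"
    unfolding mbasic_def by (rule keys_sum)
  also have "\<dots> \<subseteq> {u @ v | u v. (u, v) \<in> mpairs \<sigma> \<tau>}"
  proof
    fix x assume "x \<in> (\<Union>i\<in>mpairs \<sigma> \<tau>. Poly_Mapping.keys ((\<lambda>(u, v). Poly_Mapping.single (u @ v) (1::int)) i))"
    then obtain u v where "(u, v) \<in> mpairs \<sigma> \<tau>" "x \<in> Poly_Mapping.keys (Poly_Mapping.single (u @ v) (1::int))"
      by auto
    then show "x \<in> {u @ v | u v. (u, v) \<in> mpairs \<sigma> \<tau>}" by auto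
  qed
  finally show ?thesis .
qed

lemma keys_mprod:
  assumes "w \<in> Poly_Mapping.keys (mprod f g)"
  shows "\<exists>\<sigma>\<in>Poly_Mapping.keys f. \<exists>\<tau>\<in>Poly_Mapping.keys g. \<exists>u v. (u, v) \<in> mpairs \<sigma> \<tau> \<and> w = u @ v"
proof -
  define H where "H \<sigma> \<tau> = Poly_Mapping.map (\<lambda>c. (Poly_Mapping.lookup f \<sigma> * Poly_Mapping.lookup g \<tau>) * c) (mbasic \<sigma> \<tau>)" for \<sigma> \<tau>
  define G where "G \<sigma> = (\<Sum>\<tau> \<in> Poly_Mapping.keys g. H \<sigma> \<tau>)" for \<sigma>
  have e: "mprod f g = sum G (Poly_Mapping.keys f)" unfolding mprod_def G_def H_def by (rule refl)
  have "w \<in> (\<Union>\<sigma>\<in>Poly_Mapping.keys f. Poly_Mapping.keys (G \<sigma>))"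
    using assms keys_sum[of G "Poly_Mapping.keys f"] unfolding e by (rule subsetD[rotated])
  then obtain \<sigma> where s: "\<sigma> \<in> Poly_Mapping.keys f" and w1: "w \<in> Poly_Mapping.keys (G \<sigma>)"
    by auto
  have "w \<in> (\<Union>\<tau>\<in>Poly_Mapping.keys g. Poly_Mapping.keys (H \<sigma> \<tau>))"
    using w1 keys_sum[of "H \<sigma>" "Poly_Mapping.keys g"] unfolding G_def by (rule subsetD[rotated])
  then obtain \<tau> where t: "\<tau> \<in> Poly_Mapping.keys g" and w2: "w \<in> Poly_Mapping.keys (H \<sigma> \<tau>)"
    by auto
  then have "w \<in> Poly_Mapping.keys (mbasic \<sigma> \<tau>)"
    using subsetD[OF keys_pmap_subset] unfolding H_def by metis
  then have "w \<in> {u @ v | u v. (u, v) \<in> mpairs \<sigma> \<tau>}" by (rule subsetD[OF keys_mbasic])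
  then obtain u v where "(u, v) \<in> mpairs \<sigma> \<tau>" "w = u @ v" by auto
  then show ?thesis using s t by blast
qed

theorem proposition14p1:
  shows "J_nonlsd \<subseteq> MPR \<and>
         (\<forall>x \<in> MPR. \<forall>y \<in> J_nonlsd. mprod x y \<in> J_nonlsd \<and> mprod y x \<in> J_nonlsd)"
proof (intro conjI ballI)
  show "J_nonlsd \<subseteq> MPR" unfolding J_nonlsd_def MPR_def by auto
next
  fix x y assume x: "x \<in> MPR" and y: "y \<in> J_nonlsd"
  have ky: "\<And>\<tau>. \<tau> \<in> Poly_Mapping.keys y \<Longrightarrow> permword \<tau> \<and> \<not> lsd \<tau>"
    using y unfolding J_nonlsd_def by auto
  have "Poly_Mapping.keys (mprod x y) \<subseteq> {w. permword w \<and> \<not> lsd w}"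
  proof (rule subsetI)
    fix w assume "w \<in> Poly_Mapping.keys (mprod x y)"
    then obtain \<sigma> \<tau> u v where o: "\<tau> \<in> Poly_Mapping.keys y" "(u, v) \<in> mpairs \<sigma> \<tau>" "w = u @ v"
      using keys_mprod by blast
    have "permword \<tau>" "\<not> lsd \<tau>" using ky[OF o(1)] by auto
    then have "permword (u @ v) \<and> \<not> lsd (u @ v)" by (rule nonlsd_right[OF o(2)])
    then show "w \<in> {w. permword w \<and> \<not> lsd w}" using o(3) by simp
  qed
  then show "mprod x y \<in> J_nonlsd" unfolding J_nonlsd_def by simp
  have "Poly_Mapping.keys (mprod y x) \<subseteq> {w. permword w \<and> \<not> lsd w}"
  proof (rule subsetI)
    fix w assume "w \<in> Poly_Mapping.keys (mprod y x)"
    then obtain \<sigma> \<tau> u v where o: "\<sigma> \<in> Poly_Mapping.keys y" "(u, v) \<in> mpairs \<sigma> \<tau>" "w = u @ v"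
      using keys_mprod by blast
    have "permword \<sigma>" "\<not> lsd \<sigma>" using ky[OF o(1)] by auto
    then have "permword (u @ v) \<and> \<not> lsd (u @ v)" by (rule nonlsd_left[OF o(2)])
    then show "w \<in> {w. permword w \<and> \<not> lsd w}" using o(3) by simp
  qed
  then show "mprod y x \<in> J_nonlsd" unfolding J_nonlsd_def by simp
qed

end
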